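(* Let $X$ be a compact Hausdorff space with its unique compatible uniform structure $\mathfrak{U}$, and let $\sim$ be a topologically quasiconvex equivalence relation on $X$. For $A\subseteq X/\!\sim$ put $\sim_A\ =\Delta X\cup\bigcup_{[x]\in A}[x]\times[x]$. Then for every $A\subseteq X/\!\sim$, the quotient space $X/\!\sim_A$ is Hausdorff.
   Context: A subset $S$ is $u$-small (for an entourage $u$) if $S\times S\subseteq u$. An equivalence relation $\sim$ on a compact Hausdorff space $X$ is topologically quasiconvex if every equivalence class $[q]$ is closed and, for every $u\in\mathfrak{U}$, only finitely many equivalence classes are not $u$-small. *)

theory Defs
  imports "HOL-Analysis.Analysis"
begin

definition entourage :: "('a::uniform_space \<times> 'a) set \<Rightarrow> bool" where
  "entourage u \<longleftrightarrow> eventually (\<lambda>xy. xy \<in> u) uniformity"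

definition small :: "('a \<times> 'a) set \<Rightarrow> 'a set \<Rightarrow> bool" where
  "small u S \<longleftrightarrow> S \<times> S \<subseteq> u"

definition topologically_quasiconvex :: "('a::uniform_space \<times> 'a) set \<Rightarrow> bool" where
  "topologically_quasiconvex R \<longleftrightarrow>
     equiv UNIV R \<and> (\<forall>q. closed (R `` {q})) \<and>
     (\<forall>u. entourage u \<longrightarrow> finite {C \<in> UNIV // R. \<not> small u C})"

definition quotient_topology :: "'a topology \<Rightarrow> ('a \<times> 'a) set \<Rightarrow> 'a set topology" where
  "quotient_topology X R = topology (\<lambda>U. U \<subseteq> topspace X // R \<and>
      openin X {x \<in> topspace X. R `` {x} \<in> U})"

lemma istopology_quotient:
  "istopology (\<lambda>U. U \<subseteq> topspace X // R \<and> openin X {x \<in> topspace X. R `` {x} \<in> U})"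
proof -
  have 1: "openin X {x \<in> topspace X. R `` {x} \<in> S \<inter> T}"
    if "openin X {x \<in> topspace X. R `` {x} \<in> S}" "openin X {x \<in> topspace X. R `` {x} \<in> T}" for S T
  proof -
    have "{x \<in> topspace X. R `` {x} \<in> S \<inter> T} = {x \<in> topspace X. R `` {x} \<in> S} \<inter> {x \<in> topspace X. R `` {x} \<in> T}" by auto
    thus ?thesis using that by auto
  qed
  have 2: "openin X {x \<in> topspace X. R `` {x} \<in> \<Union>K}"
    if "\<forall>U\<in>K. openin X {x \<in> topspace X. R `` {x} \<in> U}" for K
  proof -
    have "{x \<in> topspace X. R `` {x} \<in> \<Union>K} = (\<Union>U\<in>K. {x \<in> topspace X. R `` {x} \<in> U})" by auto
    thus ?thesis using that by auto
  qed
  show ?thesis unfolding istopology_def using 1 2 by blast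
qed

definition sim_A :: "('a \<times> 'a) set \<Rightarrow> 'a set set \<Rightarrow> ('a \<times> 'a) set" where
  "sim_A R A = Id \<union> (\<Union>C\<in>A. C \<times> C)"

end

theory Submission
  imports Defs
begin

lemma haus_t2: "Hausdorff_space (euclidean :: ('a::t2_space) topology)"
  unfolding Hausdorff_space_def by (auto simp: disjnt_def separation_t2)

lemma simA_equiv:
  assumes "equiv UNIV R" "A \<subseteq> UNIV // R"
  shows "equiv UNIV (sim_A R A)"
proof -
  have tr: "(x,z) \<in> sim_A R A" if "(x,y) \<in> sim_A R A" "(y,z) \<in> sim_A R A" for x y z
  proof -
    { fix C D assume C: "C \<in> A" "x \<in> C" "y \<in> C" and D: "D \<in> A" "y \<in> D" "z \<in> D"
      have "C = D" using quotient_disj[OF assms(1)] C D assms(2) by blast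
      hence ?thesis using C D by (auto simp: sim_A_def) }
    thus ?thesis using that unfolding sim_A_def by blast
  qed
  have "refl_on UNIV (sim_A R A)" by (auto simp: refl_on_def sim_A_def)
  moreover have "sym (sim_A R A)" unfolding sym_def sim_A_def by blast
  moreover have "trans (sim_A R A)" using tr unfolding trans_def by blast
  ultimately show ?thesis unfolding equiv_def by auto
qed

lemma simA_class:
  fixes R :: "('a::t1_space \<times> 'a) set"
  assumes "equiv UNIV R" "A \<subseteq> UNIV // R" and that: "\<forall>q. closed (R `` {q})"
  shows "closed (sim_A R A `` {p})"
proof (cases "\<exists>C\<in>A. p \<in> C")
  case True
  then obtain C where C: "C \<in> A" "p \<in> C" by blast
  have "sim_A R A `` {p} = C"
  proof -
    { fix y D assume "D \<in> A" "p \<in> D" "y \<in> D"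
      hence "D = C" using quotient_disj[OF assms(1)] C assms(2) by blast }
    thus ?thesis using C unfolding sim_A_def by blast
  qed
  moreover obtain q where "C = R `` {q}" using C assms(2) by (auto simp: quotient_def)
  ultimately show ?thesis using that by simp
next
  case False
  hence "sim_A R A `` {p} = {p}" unfolding sim_A_def by auto
  thus ?thesis by simp
qed

lemma sat_closed:
  fixes R :: "('a::uniform_space \<times> 'a) set"
  assumes tq: "topologically_quasiconvex R" and AR: "A \<subseteq> UNIV // R" and K: "closed K"
  shows "closed (sim_A R A `` K)"
proof -
  let ?S = "sim_A R A"
  have eq: "equiv UNIV R" and cl: "\<forall>q. closed (R `` {q})"
    and fin: "\<And>u. entourage u \<Longrightarrow> finite {C \<in> UNIV // R. \<not> small u C}"
    using tq unfolding topologically_quasiconvex_def by auto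
  have "open (- (?S `` K))"
    unfolding open_uniformity
  proof
    fix x assume x: "x \<in> - (?S `` K)"
    have xK: "x \<notin> K" using x unfolding sim_A_def by auto
    have "open (-K)" using K by auto
    hence E: "eventually (\<lambda>(x', y). x' = x \<longrightarrow> y \<in> -K) uniformity"
      using xK unfolding open_uniformity by auto
    obtain D where D: "eventually D uniformity"
      and Dt: "\<And>a b c. D (a, b) \<Longrightarrow> D (b, c) \<Longrightarrow> (\<lambda>(x', y). x' = x \<longrightarrow> y \<in> -K) (a, c)"
      using uniformity_transE[OF E] by blast
    let ?u = "{p. D p}"
    have ent: "entourage ?u" unfolding entourage_def using D by simp
    let ?G = "{C \<in> UNIV // R. \<not> small ?u C} \<inter> {C \<in> A. C \<inter> K \<noteq> {}}"
    have fG: "finite ?G" using fin[OF ent] by auto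
    have Gcl: "closed C" if "C \<in> ?G" for C
      using that cl by (auto simp: quotient_def)
    have Gx: "x \<notin> C" if "C \<in> ?G" for C
      using that x unfolding sim_A_def by blast
    let ?O = "- \<Union>?G"
    have "closed (\<Union>?G)" using fG Gcl by (intro closed_Union) auto
    hence oO: "open ?O" by auto
    have xO: "x \<in> ?O" using Gx by auto
    have EO: "eventually (\<lambda>(x', y). x' = x \<longrightarrow> y \<in> ?O) uniformity"
      using oO xO unfolding open_uniformity by blast
    show "eventually (\<lambda>(x', y). x' = x \<longrightarrow> y \<in> - (?S `` K)) uniformity"
      using EO D
    proof eventually_elim
      case (elim p)
      obtain a y where p: "p = (a, y)" by (cases p)
      have "False" if ax: "a = x" and yS: "y \<in> ?S `` K"
      proof -
        have yO: "y \<in> ?O" and Dxy: "D (x, y)" using elim p ax by auto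
        from yS obtain k where k: "k \<in> K" "(k, y) \<in> ?S" by auto
        show False
        proof (cases "k = y")
          case True
          have "D (y, y)" using uniformity_refl[OF D] .
          then show False using Dt[OF Dxy] True k by auto
        next
          case False
          then obtain C where C: "C \<in> A" "k \<in> C" "y \<in> C" using k unfolding sim_A_def by auto
          show False
          proof (cases "small ?u C")
            case True
            hence "D (y, k)" using C unfolding small_def by auto
            then show False using Dt[OF Dxy] k by auto
          next
            case False
            hence "C \<in> ?G" using C AR k(1) by auto
            then show False using yO C by auto
          qed
        qed
      qed
      then show ?case unfolding p by auto
    qed
  qed
  thus ?thesis by (simp add: closed_def)
qed

theorem mainTheorem8:
  fixes R :: "('a::{uniform_space, t2_space} \<times> 'a) set"
    and A :: "'a set set"
  assumes "compact (UNIV :: 'a set)"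
    and "topologically_quasiconvex R"
    and "A \<subseteq> UNIV // R"
  shows "Hausdorff_space (quotient_topology euclidean (sim_A R A))"
proof -
  let ?S = "sim_A R A"
  let ?T = "quotient_topology euclidean ?S"
  have eq: "equiv UNIV R" and cl: "\<forall>q. closed (R `` {q})"
    using assms(2) unfolding topologically_quasiconvex_def by auto
  have eS: "equiv UNIV ?S" using simA_equiv[OF eq assms(3)] .
  have symS: "sym ?S" and transS: "trans ?S" using eS by (simp_all add: equiv_def)
  have op: "openin ?T U \<longleftrightarrow> U \<subseteq> UNIV // ?S \<and> open {x. ?S `` {x} \<in> U}" for U
    unfolding quotient_topology_def
    by (subst topology_inverse'[OF istopology_quotient]) simp
  have ts: "topspace ?T \<subseteq> UNIV // ?S"
    unfolding topspace_def using op by auto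
  have star_open: "open (- (?S `` (- U)))" if "open U" for U
    using sat_closed[OF assms(2,3), of "-U"] that by (simp add: closed_def)
  have sat: "y \<in> - (?S `` (- U))" if "x \<in> - (?S `` (- U))" "(x, y) \<in> ?S" for x y U
  proof
    assume "y \<in> ?S `` (- U)"
    then obtain z where z: "z \<notin> U" "(z, y) \<in> ?S" by auto
    have "(y, x) \<in> ?S" using that(2) symD[OF symS] by blast
    hence "(z, x) \<in> ?S" using z(2) transD[OF transS] by blast
    thus False using that(1) z(1) by blast
  qed
  have sub: "- (?S `` (- U)) \<subseteq> U" for U
  proof
    fix x assume "x \<in> - (?S `` (- U))"
    moreover have "(x, x) \<in> ?S" by (simp add: sim_A_def)
    ultimately show "x \<in> U" by blast
  qed
  show ?thesis
    unfolding Hausdorff_space_def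
  proof clarify
    fix P Q assume P: "P \<in> topspace ?T" and Q: "Q \<in> topspace ?T" and PQ: "P \<noteq> Q"
    obtain p where p: "P = ?S `` {p}" using P ts by (auto simp: quotient_def)
    obtain q where q: "Q = ?S `` {q}" using Q ts by (auto simp: quotient_def)
    have cP: "compact P" using simA_class[OF eq assms(3) cl] p
      by (metis assms(1) closed_Int_compact inf_top_right)
    have cQ: "compact Q" using simA_class[OF eq assms(3) cl] q
      by (metis assms(1) closed_Int_compact inf_top_right)
    have dPQ: "disjnt P Q"
      using quotient_disj[OF eS] PQ p q unfolding disjnt_def by (metis UNIV_I quotientI)
    obtain U1 U2 where U: "open U1" "open U2" "P \<subseteq> U1" "Q \<subseteq> U2" "disjnt U1 U2"
    proof -
      have "compactin euclidean P" "compactin euclidean Q" using cP cQ by simp_all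
      then obtain U V where "openin euclidean U" "openin euclidean V" "P \<subseteq> U" "Q \<subseteq> V" "disjnt U V"
        using haus_t2[unfolded Hausdorff_space_compact_sets, rule_format, of P Q] dPQ by blast
      thus ?thesis using that by simp
    qed
    define V1 where "V1 = - (?S `` (- U1))"
    define V2 where "V2 = - (?S `` (- U2))"
    have pV1: "p \<in> V1" unfolding V1_def
    proof
      assume "p \<in> ?S `` (- U1)"
      then obtain z where "z \<notin> U1" "(z, p) \<in> ?S" by auto
      hence "z \<in> P" using p symD[OF symS] by blast
      thus False using U(3) \<open>z \<notin> U1\<close> by auto
    qed
    have qV2: "q \<in> V2" unfolding V2_def
    proof
      assume "q \<in> ?S `` (- U2)"
      then obtain z where "z \<notin> U2" "(z, q) \<in> ?S" by auto
      hence "z \<in> Q" using q symD[OF symS] by blast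
      thus False using U(4) \<open>z \<notin> U2\<close> by auto
    qed
    define W1 where "W1 = (\<lambda>x. ?S `` {x}) ` V1"
    define W2 where "W2 = (\<lambda>x. ?S `` {x}) ` V2"
    have pre: "{x. ?S `` {x} \<in> (\<lambda>x. ?S `` {x}) ` (- (?S `` (- U)))} = - (?S `` (- U))" for U
    proof
      show "- (?S `` (- U)) \<subseteq> {x. ?S `` {x} \<in> (\<lambda>x. ?S `` {x}) ` (- (?S `` (- U)))}" by blast
      show "{x. ?S `` {x} \<in> (\<lambda>x. ?S `` {x}) ` (- (?S `` (- U)))} \<subseteq> - (?S `` (- U))"
      proof
        fix x assume "x \<in> {x. ?S `` {x} \<in> (\<lambda>x. ?S `` {x}) ` (- (?S `` (- U)))}"
        then obtain y where y: "y \<in> - (?S `` (- U))" "?S `` {x} = ?S `` {y}" by auto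
        have "(y, x) \<in> ?S" using y(2) eS by (metis UNIV_I eq_equiv_class_iff)
        thus "x \<in> - (?S `` (- U))" using sat[OF y(1)] by blast
      qed
    qed
    have oW1: "openin ?T W1"
      unfolding op W1_def V1_def pre using star_open[OF U(1)] by (auto simp: quotient_def)
    have oW2: "openin ?T W2"
      unfolding op W2_def V2_def pre using star_open[OF U(2)] by (auto simp: quotient_def)
    have dW: "disjnt W1 W2"
    proof -
      { fix x y assume h: "x \<in> V1" "y \<in> V2" "?S `` {x} = ?S `` {y}"
        have "(x, y) \<in> ?S" using h(3) eS by (metis UNIV_I eq_equiv_class_iff)
        hence "y \<in> V1" using sat[of x U1 y] h(1) unfolding V1_def by blast
        hence "y \<in> U1" using sub[of U1] unfolding V1_def by blast
        moreover have "y \<in> U2" using h(2) sub[of U2] unfolding V2_def by blast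
        ultimately have False using U(5) unfolding disjnt_def by blast }
      thus ?thesis unfolding W1_def W2_def disjnt_def by blast
    qed
    show "\<exists>U V. openin ?T U \<and> openin ?T V \<and> P \<in> U \<and> Q \<in> V \<and> disjnt U V"
      using oW1 oW2 dW pV1 qV2 p q unfolding W1_def W2_def by blast
  qed
qed

end
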